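(* For any integer $n\ge1$ and real $0<p<1$, $$\sum_{t=0}^{n+1}|B_{n,p}(t-1)-B_{n,p}(t)|\le\frac{1}{\sqrt n}\cdot\frac{4}{\sqrt{p(1-p)}}.$$
   Context: $B_{n,p}(t)=\binom nt p^t(1-p)^{n-t}$ for $t\in[0:n]$ and $B_{n,p}(t)=0$ for $t\notin[0:n]$. *)

theory Defs
  imports Complex_Main
begin

definition binom_pmf :: "nat \<Rightarrow> real \<Rightarrow> int \<Rightarrow> real" where
  "binom_pmf n p t = (if 0 \<le> t \<and> t \<le> int n
     then real (n choose nat t) * p ^ nat t * (1 - p) ^ (n - nat t) else 0)"

end

theory Submission
  imports Defs
begin

definition bb :: "real \<Rightarrow> nat \<Rightarrow> nat \<Rightarrow> real" where
  "bb p m k = real (m choose k) * p ^ k * (1 - p) ^ (m - k)"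

lemma bb_zero: "m < k \<Longrightarrow> bb p m k = 0"
  by (simp add: bb_def)

lemma bb_Suc_pt: "bb p (Suc m) k = p * (if k = 0 then 0 else bb p m (k - 1)) + (1 - p) * bb p m k"
proof (cases k)
  case 0
  then show ?thesis by (simp add: bb_def)
next
  case (Suc j)
  show ?thesis
  proof (cases "j < m")
    case True
    then have e: "m - j = Suc (m - Suc j)" by presburger
    show ?thesis using Suc True
      by (simp add: bb_def e algebra_simps)
  next
    case False
    then have "m - j = 0" by simp
    then show ?thesis using Suc False
      by (simp add: bb_def algebra_simps)
  qed
qed

lemma bb_rec: "(\<Sum>k\<le>Suc m. f k * bb p (Suc m) k) = (\<Sum>k\<le>m. (p * f (Suc k) + (1 - p) * f k) * bb p m k)"
proof -
  have "(\<Sum>k\<le>Suc m. f k * bb p (Suc m) k)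
     = p * (\<Sum>k\<le>Suc m. f k * (if k = 0 then 0 else bb p m (k - 1))) + (1 - p) * (\<Sum>k\<le>Suc m. f k * bb p m k)"
    by (simp add: bb_Suc_pt distrib_left sum.distrib sum_distrib_left mult.left_commute)
  also have "(\<Sum>k\<le>Suc m. f k * (if k = 0 then 0 else bb p m (k - 1))) = (\<Sum>k\<le>m. f (Suc k) * bb p m k)"
    by (subst sum.atMost_Suc_shift) simp
  also have "(\<Sum>k\<le>Suc m. f k * bb p m k) = (\<Sum>k\<le>m. f k * bb p m k)"
    by (simp add: bb_zero)
  finally show ?thesis by (simp add: distrib_right sum.distrib sum_distrib_left mult.assoc mult.left_commute)
qed

lemma M0: "(\<Sum>k\<le>m. bb p m k) = 1"
proof (induction m)
  case 0 then show ?case by (simp add: bb_def)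
next
  case (Suc m)
  have "(\<Sum>k\<le>Suc m. bb p (Suc m) k) = (\<Sum>k\<le>Suc m. (\<lambda>_. 1) k * bb p (Suc m) k)" by simp
  also have "\<dots> = (\<Sum>k\<le>m. bb p m k)" by (subst bb_rec) (simp add: algebra_simps)
  finally show ?case using Suc by simp
qed

lemma M1: "(\<Sum>k\<le>m. real k * bb p m k) = m * p"
proof (induction m)
  case 0 then show ?case by (simp add: bb_def)
next
  case (Suc m)
  have "(\<Sum>k\<le>Suc m. real k * bb p (Suc m) k) = (\<Sum>k\<le>m. (p * real (Suc k) + (1 - p) * real k) * bb p m k)"
    by (rule bb_rec)
  also have "\<dots> = (\<Sum>k\<le>m. real k * bb p m k) + p * (\<Sum>k\<le>m. bb p m k)"
    by (simp add: algebra_simps sum.distrib sum_distrib_left)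
  finally show ?case using Suc by (simp add: M0 algebra_simps)
qed

lemma M2: "(\<Sum>k\<le>m. (real k)^2 * bb p m k) = m * p * (1 - p) + (m * p)^2"
proof (induction m)
  case 0 then show ?case by (simp add: bb_def)
next
  case (Suc m)
  have "(\<Sum>k\<le>Suc m. (real k)^2 * bb p (Suc m) k) = (\<Sum>k\<le>m. (p * (real (Suc k))^2 + (1 - p) * (real k)^2) * bb p m k)"
    by (rule bb_rec)
  also have "\<dots> = (\<Sum>k\<le>m. (real k)^2 * bb p m k) + 2 * p * (\<Sum>k\<le>m. real k * bb p m k) + p * (\<Sum>k\<le>m. bb p m k)"
    by (simp add: algebra_simps sum.distrib sum_distrib_left power2_eq_square)
  finally show ?case using Suc by (simp add: M0 M1 algebra_simps power2_eq_square)
qed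

lemma Var: "(\<Sum>k\<le>m. (real k - m * p)^2 * bb p m k) = m * p * (1 - p)"
proof -
  have "(\<Sum>k\<le>m. (real k - m * p)^2 * bb p m k)
      = (\<Sum>k\<le>m. (real k)^2 * bb p m k) - 2 * (m * p) * (\<Sum>k\<le>m. real k * bb p m k) + (m*p)^2 * (\<Sum>k\<le>m. bb p m k)"
    by (simp add: algebra_simps sum.distrib sum_distrib_left power2_eq_square sum_subtractf)
  also have "\<dots> = m * p * (1 - p)" unfolding M0 M1 M2 by (simp add: power2_eq_square algebra_simps)
  finally show ?thesis .
qed

lemma bb_nonneg: "0 \<le> p \<Longrightarrow> p \<le> 1 \<Longrightarrow> 0 \<le> bb p m k"
  by (simp add: bb_def)

lemma MAD:
  assumes "0 < p" "p < 1" "m \<ge> 1"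
  shows "(\<Sum>k\<le>m. \<bar>real k - m * p\<bar> * bb p m k) \<le> sqrt (m * p * (1 - p))"
proof -
  define c where "c = sqrt (m * p * (1 - p))"
  have v: "m * p * (1 - p) > 0" using assms by simp
  then have c: "c > 0" "c^2 = m * p * (1 - p)" unfolding c_def by auto
  have pt: "\<bar>x\<bar> \<le> (x^2 + c^2) / (2 * c)" for x :: real
  proof -
    have "0 \<le> (\<bar>x\<bar> - c)^2" by simp
    then have "2 * c * \<bar>x\<bar> \<le> x^2 + c^2" by (simp add: power2_eq_square algebra_simps)
    then show ?thesis using c by (simp add: field_simps)
  qed
  have "(\<Sum>k\<le>m. \<bar>real k - m * p\<bar> * bb p m k) \<le> (\<Sum>k\<le>m. ((real k - m * p)^2 + c^2) / (2 * c) * bb p m k)"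
    by (intro sum_mono mult_right_mono pt bb_nonneg) (use assms in auto)
  also have "\<dots> = (\<Sum>k\<le>m. (real k - m * p)^2 * bb p m k / (2 * c) + c^2 * bb p m k / (2 * c))"
    by (rule sum.cong) (simp_all add: add_divide_distrib distrib_right)
  also have "\<dots> = (\<Sum>k\<le>m. (real k - m * p)^2 * bb p m k) / (2 * c) + c^2 * (\<Sum>k\<le>m. bb p m k) / (2 * c)"
    by (simp add: sum.distrib sum_divide_distrib[symmetric] sum_distrib_left)
  also have "\<dots> = c"
    unfolding Var M0 c(2)[symmetric] using c(1) by (simp add: field_simps power2_eq_square)
  finally show ?thesis unfolding c_def .
qed

lemma identA:
  assumes "k \<le> Suc n" "0 < p" "p < 1"
  shows "binom_pmf n p (int k - 1) = bb p (Suc n) k * real k / (real (Suc n) * p)"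
proof (cases k)
  case 0 then show ?thesis by (simp add: binom_pmf_def)
next
  case (Suc j)
  have j: "j \<le> n" using Suc assms by simp
  have i: "int k - 1 = int j" using Suc by simp
  have c: "real (Suc n choose Suc j) * real (Suc j) = real (Suc n) * real (n choose j)"
    by (metis Suc_times_binomial_eq of_nat_mult)
  have "bb p (Suc n) k * real k / (real (Suc n) * p)
      = (real (Suc n choose Suc j) * real (Suc j)) * p ^ j * (1 - p) ^ (n - j) * p / (real (Suc n) * p)"
    using Suc by (simp add: bb_def)
  also have "\<dots> = real (n choose j) * p ^ j * (1 - p) ^ (n - j)"
  proof -
    have "real (Suc n) * p \<noteq> 0" using assms by simp
    then show ?thesis unfolding c by (simp only: mult_ac) (simp add: mult.assoc[symmetric])
  qed
  finally show ?thesis using i j by (simp add: binom_pmf_def)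
qed

lemma identB:
  assumes "k \<le> Suc n" "0 < p" "p < 1"
  shows "binom_pmf n p (int k) = bb p (Suc n) k * (real (Suc n) - real k) / (real (Suc n) * (1 - p))"
proof (cases "k = Suc n")
  case True then show ?thesis by (simp add: binom_pmf_def)
next
  case False
  then have k: "k \<le> n" using assms by simp
  have c: "real (Suc n - k) * real (Suc n choose k) = real (Suc n) * real (n choose k)"
    by (metis binomial_absorb_comp diff_Suc_1 of_nat_mult)
  have e: "Suc n - k = Suc (n - k)" using k by simp
  have "bb p (Suc n) k * (real (Suc n) - real k) / (real (Suc n) * (1 - p))
      = (real (Suc n - k) * real (Suc n choose k)) * p ^ k * (1 - p) ^ (n - k) * (1 - p) / (real (Suc n) * (1 - p))"
    using k by (simp add: bb_def e of_nat_diff)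
  also have "\<dots> = real (n choose k) * p ^ k * (1 - p) ^ (n - k)"
  proof -
    have "real (Suc n) * (1 - p) \<noteq> 0" using assms by simp
    then show ?thesis unfolding c by (simp only: mult_ac) (simp add: mult.assoc[symmetric])
  qed
  finally show ?thesis using k by (simp add: binom_pmf_def)
qed

lemma alg: fixes a k M P :: real
  assumes "M \<noteq> 0" "P \<noteq> 0" "1 - P \<noteq> 0"
  shows "a * k / (M * P) - a * (M - k) / (M * (1 - P)) = (k - M * P) * a / (M * P * (1 - P))"
proof -
  have "a * k / (M * P) = a * k * (1 - P) / (M * P * (1 - P))" using assms by simp
  moreover have "a * (M - k) / (M * (1 - P)) = a * (M - k) * P / (M * P * (1 - P))" using assms by simp
  ultimately show ?thesis by (simp add: diff_divide_distrib[symmetric] algebra_simps)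
qed

lemma a1: fixes D :: real assumes D: "D > 0" shows "sqrt D / D = 1 / sqrt D"
proof -
  have s: "sqrt D > 0" using D by simp
  have e: "sqrt D * sqrt D = D" using D by simp
  have "sqrt D / D = sqrt D / (sqrt D * sqrt D)" by (simp only: e)
  also have "\<dots> = 1 / sqrt D"
  proof -
    have g: "\<And>x::real. x > 0 \<Longrightarrow> x / (x * x) = 1 / x" by simp
    show ?thesis by (rule g[OF s])
  qed
  finally show ?thesis .
qed
lemma a2: fixes n m :: nat and p D :: real assumes "n \<ge> 1" "0 < p" "p < 1" "m = Suc n" "D = real m * p * (1 - p)"
  shows "1 / sqrt D \<le> 1 / sqrt (real n * (p * (1 - p)))"
  proof -
    have "0 < real n * (p * (1 - p))" using assms by simp
    moreover have "real n * (p * (1 - p)) \<le> real m * (p * (1 - p))"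
      by (rule mult_right_mono) (use assms in auto)
    moreover have "D = real m * (p * (1 - p))" using assms by (simp add: mult.assoc)
    ultimately show ?thesis by (simp add: frac_le)
  qed
lemma a3: fixes n :: nat and p :: real assumes "n \<ge> 1" "0 < p" "p < 1"
  shows "1 / sqrt (real n * (p * (1 - p))) \<le> 1 / sqrt (real n) * (4 / sqrt (p * (1 - p)))"
  proof -
    have "sqrt (p * (1 - p)) > 0" using assms by simp
    moreover have "sqrt (real n) > 0" using assms by simp
    ultimately have x: "sqrt (real n) * sqrt (p * (1 - p)) > 0" by simp
    have "1 / sqrt (real n * (p * (1 - p))) = 1 / (sqrt (real n) * sqrt (p * (1 - p)))"
      by (simp only: real_sqrt_mult)
    also have "\<dots> \<le> 4 / (sqrt (real n) * sqrt (p * (1 - p)))"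
      using x by (simp add: divide_right_mono)
    also have "\<dots> = 1 / sqrt (real n) * (4 / sqrt (p * (1 - p)))" by simp
    finally show ?thesis .
  qed

theorem lemma7:
  fixes n :: nat and p :: real
  assumes "n \<ge> 1" and "0 < p" and "p < 1"
  shows "(\<Sum>t\<in>{0..int n + 1}. \<bar>binom_pmf n p (t - 1) - binom_pmf n p t\<bar>)
           \<le> 1 / sqrt (real n) * (4 / sqrt (p * (1 - p)))"
proof -
  define m where "m = Suc n"
  define D where "D = real m * p * (1 - p)"
  have D: "D > 0" using assms unfolding D_def m_def by simp
  have re: "(\<Sum>t\<in>{0..int n + 1}. \<bar>binom_pmf n p (t - 1) - binom_pmf n p t\<bar>)
      = (\<Sum>k\<le>m. \<bar>binom_pmf n p (int k - 1) - binom_pmf n p (int k)\<bar>)"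
    unfolding m_def by (rule sum.reindex_bij_witness[of _ int nat]) auto
  have pt: "\<bar>binom_pmf n p (int k - 1) - binom_pmf n p (int k)\<bar> = \<bar>real k - m * p\<bar> * bb p m k / D"
    if "k \<in> {..m}" for k
  proof -
    have k: "k \<le> Suc n" using that m_def by simp
    have "binom_pmf n p (int k - 1) - binom_pmf n p (int k)
        = bb p m k * real k / (real m * p) - bb p m k * (real m - real k) / (real m * (1 - p))"
      using identA[OF k assms(2,3)] identB[OF k assms(2,3)] unfolding m_def by simp
    also have "\<dots> = (real k - m * p) * bb p m k / D"
    proof -
      have "real m \<noteq> 0" "p \<noteq> 0" "1 - p \<noteq> 0" using assms m_def by auto
      then show ?thesis unfolding D_def by (rule alg)
    qed
    finally have "binom_pmf n p (int k - 1) - binom_pmf n p (int k) = (real k - m * p) * bb p m k / D" .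
    moreover have "\<bar>(real k - m * p) * bb p m k / D\<bar> = \<bar>real k - m * p\<bar> * bb p m k / D"
      using D bb_nonneg[of p m k] assms(2,3) by (simp add: abs_mult abs_divide)
    ultimately show ?thesis by simp
  qed
  have "(\<Sum>k\<le>m. \<bar>binom_pmf n p (int k - 1) - binom_pmf n p (int k)\<bar>)
      = (\<Sum>k\<le>m. \<bar>real k - m * p\<bar> * bb p m k) / D"
    unfolding sum_divide_distrib by (rule sum.cong[OF refl pt])
  also have "\<dots> \<le> sqrt D / D"
  proof -
    have m1: "m \<ge> 1" unfolding m_def by simp
    have S: "(\<Sum>k\<le>m. \<bar>real k - m * p\<bar> * bb p m k) \<le> sqrt D"
      using MAD[OF assms(2,3) m1] unfolding D_def .
    show ?thesis by (rule divide_right_mono[OF S]) (use D in simp)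
  qed
  also have "\<dots> = 1 / sqrt D" by (rule a1[OF D])
  also have "\<dots> \<le> 1 / sqrt (real n * (p * (1 - p)))"
    by (rule a2[OF assms m_def D_def])
  also have "\<dots> \<le> 1 / sqrt (real n) * (4 / sqrt (p * (1 - p)))"
    by (rule a3[OF assms])
  finally show ?thesis using re by simp
qed

end
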